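(* Let $N\geqslant 2$, $1<p<N$, $p<q<p+\frac{p^2}{N}$, $a,\mu>0$ with $\mu a^{q(1-\gamma_{q})}<\alpha(N,p,q)$, and let \[h(t)=\frac{1}{p}t^p-\frac{\mu}{q}C_{N,p,q}a^{q(1-\gamma_{q})}t^{q\gamma_{q}}-\frac{1}{p^*S^{p^*/p}}t^{p^*},\quad t>0.\] Then $h$ has exactly two critical points on $(0,\infty)$, one a local minimum at negative level and the other a global maximum at positive level. In addition, there exist $R_{1}>R_{0}>0$ such that $h(R_{0})=h(R_{1})=0$, and $h(t)>0$ if and only if $t\in(R_{0},R_{1})$.
   Context: $p^*=\frac{Np}{N-p}$, $\gamma_{q}=\frac{N(q-p)}{pq}$. $S$ is the optimal constant in $S\lVert u\rVert_{p^*}^p\leqslant\lVert\nabla u\rVert_p^p$; $C_{N,p,q}$ is the optimal constant in $\lVert u\rVert_q^q\leqslant C_{N,p,q}\lVert\nabla u\rVert_p^{q\gamma_q}\lVert u\rVert_p^{q(1-\gamma_q)}$. $\alpha(N,p,q)=\min\{C',C''\}$ with $C'=\Big(\frac{p^*S^{p^*/p}(p-q\gamma_{q})}{p(p^*-q\gamma_{q})}\Big)^{\frac{p-q\gamma_{q}}{p^*-p}}\frac{q(p^*-p)}{pC_{N,p,q}(p^*-q\gamma_{q})}$, $C''=\frac{pp^*}{N\gamma_{q}C_{N,p,q}(p^*-p)}\Big(\frac{q\gamma_{q}S^{N/p}}{p-q\gamma_{q}}\Big)^{\frac{p-q\gamma_{q}}{p}}$. *)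

theory Defs
  imports "HOL-Analysis.Analysis"
begin

definition pstar :: "real \<Rightarrow> real \<Rightarrow> real" where
  "pstar N p = N * p / (N - p)"

definition gammaq :: "real \<Rightarrow> real \<Rightarrow> real \<Rightarrow> real" where
  "gammaq N p q = N * (q - p) / (p * q)"

(* S: Sobolev constant, C: Gagliardo-Nirenberg constant C_{N,p,q} *)
definition alpha_C1 :: "real \<Rightarrow> real \<Rightarrow> real \<Rightarrow> real \<Rightarrow> real \<Rightarrow> real" where
  "alpha_C1 N p q S C =
     (let ps = pstar N p; g = gammaq N p q in
      ((ps * S powr (ps / p) * (p - q * g)) / (p * (ps - q * g))) powr ((p - q * g) / (ps - p))
      * (q * (ps - p)) / (p * C * (ps - q * g)))"

definition alpha_C2 :: "real \<Rightarrow> real \<Rightarrow> real \<Rightarrow> real \<Rightarrow> real \<Rightarrow> real" where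
  "alpha_C2 N p q S C =
     (let ps = pstar N p; g = gammaq N p q in
      (p * ps) / (N * g * C * (ps - p))
      * ((q * g * S powr (N / p)) / (p - q * g)) powr ((p - q * g) / p))"

definition alpha :: "real \<Rightarrow> real \<Rightarrow> real \<Rightarrow> real \<Rightarrow> real \<Rightarrow> real" where
  "alpha N p q S C = min (alpha_C1 N p q S C) (alpha_C2 N p q S C)"

definition hfun :: "real \<Rightarrow> real \<Rightarrow> real \<Rightarrow> real \<Rightarrow> real \<Rightarrow> real \<Rightarrow> real \<Rightarrow> real \<Rightarrow> real" where
  "hfun N p q S C a \<mu> t =
     (let ps = pstar N p; g = gammaq N p q in
      t powr p / p - \<mu> / q * C * a powr (q * (1 - g)) * t powr (q * g)
      - t powr ps / (ps * S powr (ps / p)))"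

end

theory Submission
  imports Defs
begin

lemma abstract_h:
  fixes p r P A B t0 :: real and h k :: "real \<Rightarrow> real"
  assumes r0: "0 < r" and rp: "r < p" and pP: "p < P" and A0: "A > 0" and B0: "B > 0"
  defines "h \<equiv> (\<lambda>t. t powr p / p - A * t powr r - B * t powr P)"
  defines "k \<equiv> (\<lambda>t. t powr (p - r) - r * A - B * P * t powr (P - r))"
  assumes t0: "t0 > 0" "h t0 > 0"
  shows "(\<exists>t1 t2. t1 > 0 \<and> t2 > 0 \<and> t1 \<noteq> t2 \<and>
            {t. t > 0 \<and> (h has_real_derivative 0) (at t)} = {t1, t2} \<and>
            (\<exists>e>0. \<forall>s. s > 0 \<and> \<bar>s - t1\<bar> < e \<longrightarrow> h t1 \<le> h s) \<and> h t1 < 0 \<and>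
            (\<forall>s>0. h s \<le> h t2) \<and> h t2 > 0)
       \<and> (\<exists>R0 R1. 0 < R0 \<and> R0 < R1 \<and> h R0 = 0 \<and> h R1 = 0 \<and>
            (\<forall>t>0. h t > 0 \<longleftrightarrow> R0 < t \<and> t < R1))"
proof -
  have p0: "p > 0" using r0 rp by linarith
  have P0: "P > 0" using p0 pP by linarith
  define hd where "hd t = t powr (r - 1) * k t" for t
  have hder: "(h has_real_derivative hd t) (at t)" if "t > 0" for t
  proof -
    have "(h has_real_derivative (p * t powr (p - 1)) / p - A * (r * t powr (r - 1)) - B * (P * t powr (P - 1))) (at t)"
      unfolding h_def using that p0
      by (intro derivative_eq_intros has_real_derivative_powr) auto
    moreover have "(p * t powr (p - 1)) / p - A * (r * t powr (r - 1)) - B * (P * t powr (P - 1)) = hd t"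
    proof -
      have e1: "t powr (r - 1) * t powr (p - r) = t powr (p - 1)" using that by (simp add: powr_add[symmetric])
      have e2: "t powr (r - 1) * t powr (P - r) = t powr (P - 1)" using that by (simp add: powr_add[symmetric])
      show ?thesis unfolding hd_def k_def using p0 e1 e2 by (simp add: algebra_simps)
    qed
    ultimately show ?thesis by simp
  qed
  define kd where "kd t = t powr (p - r - 1) * ((p - r) - B * P * (P - r) * t powr (P - p))" for t
  have kder: "(k has_real_derivative kd t) (at t)" if "t > 0" for t
  proof -
    have "(k has_real_derivative ((p - r) * t powr (p - r - 1)) - 0 - B * P * ((P - r) * t powr (P - r - 1))) (at t)"
      unfolding k_def using that
      by (intro derivative_eq_intros has_real_derivative_powr) auto
    moreover have "((p - r) * t powr (p - r - 1)) - 0 - B * P * ((P - r) * t powr (P - r - 1)) = kd t"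
    proof -
      have "p - r - 1 + (P - p) = P - r - 1" by simp
      hence e2: "t powr (p - r - 1) * t powr (P - p) = t powr (P - r - 1)" by (metis powr_add)
      show ?thesis unfolding kd_def using e2 by (simp add: algebra_simps)
    qed
    ultimately show ?thesis by simp
  qed

  have hcont: "continuous_on {x..y} h" if "0 < x" for x y
  proof (rule continuous_at_imp_continuous_on, intro ballI)
    fix z assume "z \<in> {x..y}"
    hence "z > 0" using that by simp
    thus "isCont h z" using hder by (blast intro: DERIV_isCont)
  qed
  have kcont: "continuous_on {x..y} k" if "0 < x" for x y
  proof (rule continuous_at_imp_continuous_on, intro ballI)
    fix z assume "z \<in> {x..y}"
    hence "z > 0" using that by simp
    thus "isCont k z" using kder by (blast intro: DERIV_isCont)
  qed
  define c where "c = (p - r) / (B * P * (P - r))"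
  have c0: "c > 0" unfolding c_def using rp pP B0 P0 r0 by (auto intro!: divide_pos_pos mult_pos_pos)
  define \<tau> where "\<tau> = c powr (1 / (P - p))"
  have tau0: "\<tau> > 0" unfolding \<tau>_def using c0 by simp
  have tauc: "\<tau> powr (P - p) = c" unfolding \<tau>_def using c0 pP by (simp add: powr_powr)
  have kdpos: "kd t > 0" if "0 < t" "t < \<tau>" for t
  proof -
    have "t powr (P - p) < c" using powr_less_mono2[of "P - p" t \<tau>] that pP tauc by simp
    hence "B * P * (P - r) * t powr (P - p) < p - r"
      unfolding c_def using B0 P0 pP rp by (simp add: field_simps)
    thus ?thesis unfolding kd_def using that by simp
  qed
  have kdneg: "kd t < 0" if "\<tau> < t" for t
  proof -
    have "t powr (P - p) > c" using powr_less_mono2[of "P - p" \<tau> t] that pP tauc tau0 by simp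
    hence "B * P * (P - r) * t powr (P - p) > p - r"
      unfolding c_def using B0 P0 pP rp by (simp add: field_simps)
    thus ?thesis unfolding kd_def using that tau0 by (simp add: mult_pos_neg)
  qed
  have kinc: "k x < k y" if "0 < x" "x < y" "y \<le> \<tau>" for x y
  proof (rule DERIV_pos_imp_increasing_open[OF that(2)])
    fix z assume "x < z" "z < y" thus "\<exists>d. DERIV k z :> d \<and> d > 0"
      using kder kdpos that by (intro exI[of _ "kd z"]) auto
  qed (use kcont that in simp)
  have kdec: "k y < k x" if "\<tau> \<le> x" "x < y" for x y
  proof (rule DERIV_neg_imp_decreasing_open[OF that(2)])
    fix z assume "x < z" "z < y" thus "\<exists>d. DERIV k z :> d \<and> d < 0"
      using kder kdneg that tau0 by (intro exI[of _ "kd z"]) auto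
  qed (use kcont that tau0 in simp)
  have hsmall: "h s < 0" if "0 < s" "s powr (p - r) < p * A" for s
  proof -
    have "s powr p = s powr r * s powr (p - r)" using that by (simp add: powr_add[symmetric])
    hence "s powr p / p - A * s powr r = s powr r * (s powr (p - r) / p - A)"
      using p0 by (simp add: field_simps)
    moreover have "s powr (p - r) / p - A < 0" using that p0 by (simp add: field_simps)
    ultimately have "s powr p / p - A * s powr r < 0" using that by (simp add: mult_pos_neg)
    moreover have "B * s powr P > 0" using B0 that by simp
    ultimately show ?thesis unfolding h_def by linarith
  qed
  have ksmall: "k s < 0" if "0 < s" "s powr (p - r) < r * A" for s
  proof -
    have "B * P * s powr (P - r) > 0" using B0 P0 that by simp
    thus ?thesis unfolding k_def using that by linarith
  qed
  define d where "d = 1 / (B * P) + 1 / (p * B) + 1"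
  define Lb where "Lb = d powr (1 / (P - p))"
  have d0: "d > 0" unfolding d_def using B0 P0 p0 by (simp add: add_pos_pos)
  have Lb0: "Lb > 0" unfolding Lb_def using d0 by simp
  have Lbd: "t powr (P - p) \<ge> d" if "t \<ge> Lb" for t
  proof -
    have "Lb powr (P - p) = d" unfolding Lb_def using d0 pP by (simp add: powr_powr)
    thus ?thesis using powr_mono2[of "P - p" Lb t] that pP Lb0 by simp
  qed
  have klarge: "k t < 0" if "t \<ge> Lb" for t
  proof -
    have tp: "t > 0" using that Lb0 by simp
    have "t powr (P - p) \<ge> d" using Lbd that .
    hence "B * P * t powr (P - p) \<ge> B * P * d" using B0 P0 by simp
    moreover have "B * P * d > 1" unfolding d_def using B0 P0 p0 by (simp add: field_simps add_pos_pos)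
    ultimately have "1 - B * P * t powr (P - p) < 0" by linarith
    moreover have "t powr (P - r) = t powr (p - r) * t powr (P - p)" using tp by (simp add: powr_add[symmetric])
    ultimately have "t powr (p - r) - B * P * t powr (P - r) < 0"
      using tp by (simp add: algebra_simps mult_pos_neg)
    thus ?thesis unfolding k_def using r0 A0 by (smt (verit) mult_pos_pos)
  qed
  have hlarge: "h t < 0" if "t \<ge> Lb" for t
  proof -
    have tp: "t > 0" using that Lb0 by simp
    have "t powr (P - p) \<ge> d" using Lbd that .
    hence "B * t powr (P - p) \<ge> B * d" using B0 by simp
    moreover have "B * d > 1 / p" unfolding d_def using B0 P0 p0 by (simp add: field_simps add_pos_pos)
    ultimately have "1 / p - B * t powr (P - p) < 0" by linarith
    moreover have "t powr P = t powr p * t powr (P - p)" using tp by (simp add: powr_add[symmetric])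
    ultimately have "t powr p / p - B * t powr P < 0"
      using tp mult_pos_neg[of "t powr p" "1 / p - B * t powr (P - p)"] by (simp add: algebra_simps)
    thus ?thesis unfolding h_def using A0 tp by (smt (verit) mult_pos_pos powr_gt_zero)
  qed
  define m where "m = min (r * A) (p * A)"
  have m0: "m > 0" unfolding m_def using r0 p0 A0 by simp
  define s0 where "s0 = min (\<tau> / 2) ((m / 2) powr (1 / (p - r)))"
  have s00: "s0 > 0" unfolding s0_def using tau0 m0 by simp
  have s0tau: "s0 < \<tau>" unfolding s0_def using tau0 by simp
  have smallm: "s powr (p - r) < m" if "0 < s" "s \<le> s0" for s
  proof -
    have "s \<le> (m / 2) powr (1 / (p - r))" using that unfolding s0_def by simp
    hence "s powr (p - r) \<le> ((m / 2) powr (1 / (p - r))) powr (p - r)"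
      using that rp by (intro powr_mono2) auto
    also have "\<dots> = m / 2" using m0 rp by (simp add: powr_powr)
    finally show ?thesis using m0 by simp
  qed
  have hs: "h s < 0" if "0 < s" "s \<le> s0" for s
    using hsmall smallm[OF that] that unfolding m_def by simp
  have ks: "k s < 0" if "0 < s" "s \<le> s0" for s
    using ksmall smallm[OF that] that unfolding m_def by simp
  have s0t0: "s0 < t0"
  proof (rule ccontr)
    assume "\<not> s0 < t0" thus False using hs[of t0] t0 by simp
  qed
  have ktau: "k \<tau> > 0"
  proof (rule ccontr)
    assume a: "\<not> k \<tau> > 0"
    have "k t \<le> 0" if "t > 0" for t
    proof (cases t \<tau> rule: linorder_cases)
      case less thus ?thesis using kinc[of t \<tau>] that a by simp
    next
      case greater thus ?thesis using kdec[of \<tau> t] that a by simp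
    qed (use a in simp)
    hence hdn: "hd t \<le> 0" if "t > 0" for t unfolding hd_def using that
      by (simp add: mult_nonneg_nonpos)
    have "h t0 \<le> h s0"
    proof (rule DERIV_nonpos_imp_nonincreasing[of s0 t0 h])
      fix z assume "s0 \<le> z" "z \<le> t0" thus "\<exists>d. DERIV h z :> d \<and> d \<le> 0"
        using hder hdn s00 by (intro exI[of _ "hd z"]) auto
    qed (use s0t0 in simp)
    thus False using hs[of s0] s00 t0 by simp
  qed
  obtain t1 where t1: "s0 \<le> t1" "t1 \<le> \<tau>" "k t1 = 0"
    using IVT'[of k s0 0 \<tau>] ks[of s0] s00 ktau s0tau kcont[OF s00] by auto
  have t1b: "s0 < t1" "t1 < \<tau>" using t1 ks[of s0] s00 ktau by (auto simp: order.order_iff_strict)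
  define L where "L = max \<tau> Lb + 1"
  have L: "\<tau> < L" "Lb \<le> L" unfolding L_def by auto
  obtain t2 where t2: "\<tau> \<le> t2" "t2 \<le> L" "k t2 = 0"
    using IVT2'[of k L 0 \<tau>] klarge[of L] L ktau kcont[OF tau0] by auto
  have t2b: "\<tau> < t2" using t2 ktau by (auto simp: order.order_iff_strict)
  have t10: "t1 > 0" using t1b s00 by simp
  have t20: "t2 > 0" using t2b tau0 by simp
  have ksign1: "k t < 0" if "0 < t" "t < t1" for t using kinc[of t t1] that t1 t1b by simp
  have ksign2: "k t > 0" if "t1 < t" "t < t2" for t
  proof (cases "t \<le> \<tau>")
    case True thus ?thesis using kinc[of t1 t] that t1 t10 by simp
  next
    case False thus ?thesis using kdec[of t t2] that t2 by simp
  qed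
  have ksign3: "k t < 0" if "t2 < t" for t using kdec[of t2 t] that t2 by simp
  have hdsign: "hd t < 0 \<longleftrightarrow> k t < 0" "hd t > 0 \<longleftrightarrow> k t > 0" "hd t = 0 \<longleftrightarrow> k t = 0" if "t > 0" for t
    unfolding hd_def using that by (auto simp: zero_less_mult_iff mult_less_0_iff)
  have hdec1: "h y < h x" if "0 < x" "x < y" "y \<le> t1" for x y
  proof (rule DERIV_neg_imp_decreasing_open[OF that(2)])
    fix z assume "x < z" "z < y" thus "\<exists>d. DERIV h z :> d \<and> d < 0"
      using hder hdsign ksign1 that by (intro exI[of _ "hd z"]) auto
  qed (use hcont that in simp)
  have hinc: "h x < h y" if "t1 \<le> x" "x < y" "y \<le> t2" for x y
  proof (rule DERIV_pos_imp_increasing_open[OF that(2)])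
    fix z assume "x < z" "z < y" thus "\<exists>d. DERIV h z :> d \<and> d > 0"
      using hder hdsign ksign2 that t10 by (intro exI[of _ "hd z"]) auto
  qed (use hcont that t10 in simp)
  have hdec2: "h y < h x" if "t2 \<le> x" "x < y" for x y
  proof (rule DERIV_neg_imp_decreasing_open[OF that(2)])
    fix z assume "x < z" "z < y" thus "\<exists>d. DERIV h z :> d \<and> d < 0"
      using hder hdsign ksign3 that t20 by (intro exI[of _ "hd z"]) auto
  qed (use hcont that t20 in simp)
  have hneg: "h t < 0" if "0 < t" "t \<le> t1" for t
  proof (cases "t \<le> s0")
    case True thus ?thesis using hs that by simp
  next
    case False thus ?thesis using hdec1[of s0 t] hs[of s0] s00 that by simp
  qed
  have t1t0: "t1 < t0" using hneg[of t0] t0 by force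
  have ht2: "h t0 \<le> h t2"
  proof (cases "t0 \<le> t2")
    case True thus ?thesis using hinc[of t0 t2] t1t0 by (cases "t0 = t2") auto
  next
    case False thus ?thesis using hdec2[of t2 t0] by simp
  qed
  have h2pos: "h t2 > 0" using ht2 t0 by simp
  have gmax: "h s \<le> h t2" if "s > 0" for s
  proof -
    consider "s \<le> t1" | "t1 < s" "s \<le> t2" | "t2 < s" by linarith
    thus ?thesis
    proof cases
      case 1 thus ?thesis using hneg[of s] that h2pos by simp
    next
      case 2 thus ?thesis using hinc[of s t2] by (cases "s = t2") auto
    next
      case 3 thus ?thesis using hdec2[of t2 s] by simp
    qed
  qed
  have lmin: "h t1 \<le> h s" if "s > 0" "\<bar>s - t1\<bar> < t2 - t1" for s
  proof -
    consider "s < t1" | "s = t1" | "t1 < s" by linarith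
    thus ?thesis
    proof cases
      case 1 thus ?thesis using hdec1[of s t1] that by simp
    next
      case 3 thus ?thesis using hinc[of t1 s] that by simp
    qed simp
  qed
  have crit: "{t. t > 0 \<and> (h has_real_derivative 0) (at t)} = {t1, t2}"
  proof (intro equalityI subsetI)
    fix t assume "t \<in> {t. t > 0 \<and> (h has_real_derivative 0) (at t)}"
    hence tp: "t > 0" and d: "(h has_real_derivative 0) (at t)" by auto
    have "hd t = 0" using DERIV_unique[OF hder[OF tp] d] .
    hence "k t = 0" using hdsign[OF tp] by simp
    show "t \<in> {t1, t2}"
    proof (rule ccontr)
      assume "t \<notin> {t1, t2}"
      hence ne: "t \<noteq> t1" "t \<noteq> t2" by auto
      have "t1 < t2" using t1b t2b by simp
      then consider "t < t1" | "t1 < t" "t < t2" | "t2 < t" using ne by linarith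
      thus False using ksign1[OF tp] ksign2[of t] ksign3[of t] \<open>k t = 0\<close> by cases auto
    qed
  next
    fix t assume "t \<in> {t1, t2}"
    thus "t \<in> {t. t > 0 \<and> (h has_real_derivative 0) (at t)}"
    proof -
      have "hd t1 = 0" "hd t2 = 0" using hdsign(3)[of t1] hdsign(3)[of t2] t10 t20 t1(3) t2(3) by simp_all
      hence "(h has_real_derivative 0) (at t1)" "(h has_real_derivative 0) (at t2)"
        using hder[OF t10] hder[OF t20] by simp_all
      thus ?thesis using \<open>t \<in> {t1, t2}\<close> t10 t20 by auto
    qed
  qed
  have part1: "\<exists>t1 t2. t1 > 0 \<and> t2 > 0 \<and> t1 \<noteq> t2 \<and>
            {t. t > 0 \<and> (h has_real_derivative 0) (at t)} = {t1, t2} \<and>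
            (\<exists>e>0. \<forall>s. s > 0 \<and> \<bar>s - t1\<bar> < e \<longrightarrow> h t1 \<le> h s) \<and> h t1 < 0 \<and>
            (\<forall>s>0. h s \<le> h t2) \<and> h t2 > 0"
  proof -
    have lm: "\<exists>e>0. \<forall>s. s > 0 \<and> \<bar>s - t1\<bar> < e \<longrightarrow> h t1 \<le> h s"
    proof (intro exI[of _ "t2 - t1"] conjI allI impI)
      show "t2 - t1 > 0" using t1b t2b by simp
      fix s assume "s > 0 \<and> \<bar>s - t1\<bar> < t2 - t1"
      thus "h t1 \<le> h s" using lmin by blast
    qed
    have t12: "t1 \<noteq> t2" using t1b t2b by simp
    have gm: "\<forall>s>0. h s \<le> h t2" using gmax by blast
    have h1n: "h t1 < 0" using hneg[of t1] t10 by simp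
    show ?thesis
      apply (rule exI[of _ t1], rule exI[of _ t2], intro conjI)
      by (fact t10 t20 t12 crit lm h1n gm h2pos)+
  qed
  obtain R0 where R0: "t1 \<le> R0" "R0 \<le> t2" "h R0 = 0"
    using IVT'[of h t1 0 t2] hneg[of t1] t10 h2pos t1b t2b hcont[OF t10] by auto
  have R0b: "t1 < R0" "R0 < t2" using R0 hneg[of t1] t10 h2pos by (auto simp: order.order_iff_strict)
  define L2 where "L2 = max t2 Lb + 1"
  have L2: "t2 < L2" "Lb \<le> L2" unfolding L2_def by auto
  obtain R1 where R1: "t2 \<le> R1" "R1 \<le> L2" "h R1 = 0"
    using IVT2'[of h L2 0 t2] hlarge[of L2] L2 h2pos hcont[OF t20] by auto
  have R1b: "t2 < R1" using R1 h2pos by (auto simp: order.order_iff_strict)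
  have chr: "h t > 0 \<longleftrightarrow> R0 < t \<and> t < R1" if "t > 0" for t
  proof -
    consider "t \<le> t1" | "t1 < t" "t \<le> R0" | "R0 < t" "t \<le> t2" | "t2 < t" "t < R1" | "R1 \<le> t" by linarith
    thus ?thesis
    proof cases
      case 1 thus ?thesis using hneg[of t] that R0b by simp
    next
      case 2 thus ?thesis using hinc[of t R0] R0 R0b by (cases "t = R0") auto
    next
      case 3 thus ?thesis using hinc[of R0 t] R0 R0b R1b by simp
    next
      case 4 thus ?thesis using hdec2[of t R1] R1 R0b by simp
    next
      case 5 thus ?thesis using hdec2[of R1 t] R1 R1b by (cases "t = R1") auto
    qed
  qed
  have R00: "0 < R0" using R0b t10 by simp
  have R01: "R0 < R1" using R0b R1b by simp
  have chr': "\<forall>t>0. h t > 0 \<longleftrightarrow> R0 < t \<and> t < R1" using chr by blast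
  have part2: "\<exists>R0 R1. 0 < R0 \<and> R0 < R1 \<and> h R0 = 0 \<and> h R1 = 0 \<and>
            (\<forall>t>0. h t > 0 \<longleftrightarrow> R0 < t \<and> t < R1)"
    apply (rule exI[of _ R0], rule exI[of _ R1], intro conjI)
    by (fact R00 R01 R0(3) R1(3) chr')+
  show ?thesis using part1 part2 by (rule conjI)
qed

theorem lemma4p2:
  fixes N :: nat and p q a \<mu> S C :: real
  assumes "N \<ge> 2" and "1 < p" and "p < real N"
    and "p < q" and "q < p + p^2 / real N"
    and "a > 0" and "\<mu> > 0"
    and "S > 0" and "C > 0"
    and "\<mu> * a powr (q * (1 - gammaq (real N) p q)) < alpha (real N) p q S C"
  defines "h \<equiv> hfun (real N) p q S C a \<mu>"
  shows "(\<exists>t1 t2. t1 > 0 \<and> t2 > 0 \<and> t1 \<noteq> t2 \<and>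
            {t. t > 0 \<and> (h has_real_derivative 0) (at t)} = {t1, t2} \<and>
            (\<exists>e>0. \<forall>s. s > 0 \<and> \<bar>s - t1\<bar> < e \<longrightarrow> h t1 \<le> h s) \<and> h t1 < 0 \<and>
            (\<forall>s>0. h s \<le> h t2) \<and> h t2 > 0)
       \<and> (\<exists>R0 R1. 0 < R0 \<and> R0 < R1 \<and> h R0 = 0 \<and> h R1 = 0 \<and>
            (\<forall>t>0. h t > 0 \<longleftrightarrow> R0 < t \<and> t < R1))"
proof -
  define g where "g = gammaq (real N) p q"
  define r where "r = q * g"
  define P where "P = pstar (real N) p"
  define A where "A = \<mu> / q * C * a powr (q * (1 - g))"
  define B where "B = 1 / (P * S powr (P / p))"
  have p0: "p > 0" using assms by simp
  have q0: "q > 0" using assms by simp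
  have N0: "real N > 0" using assms by simp
  have rdef: "r = real N * (q - p) / p" unfolding r_def g_def gammaq_def using q0 by simp
  have r0: "r > 0" unfolding rdef using assms p0 by simp
  have rp: "r < p"
  proof -
    have "q - p < p^2 / real N" using assms by simp
    hence "real N * (q - p) < p^2" using N0 by (simp add: field_simps)
    thus ?thesis unfolding rdef using p0 by (simp add: field_simps power2_eq_square)
  qed
  have pP: "p < P"
  proof -
    have "real N - p > 0" using assms by simp
    moreover have "p * (real N - p) < real N * p" using p0 by (simp add: algebra_simps)
    ultimately show ?thesis unfolding P_def pstar_def by (simp add: field_simps)
  qed
  have A0: "A > 0" unfolding A_def using assms q0 by simp
  have P0: "P > 0" using pP p0 by simp
  have B0: "B > 0" unfolding B_def using P0 assms by simp
  have hh: "h = (\<lambda>t. t powr p / p - A * t powr r - B * t powr P)"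
    unfolding h_def hfun_def A_def B_def r_def P_def g_def Let_def by (simp add: fun_eq_iff)
  define base where "base = P * S powr (P / p) * (p - r) / (p * (P - r))"
  have base0: "base > 0" unfolding base_def using P0 assms rp pP p0 by simp
  define t0 where "t0 = base powr (1 / (P - p))"
  have t00: "t0 > 0" unfolding t0_def using base0 by simp
  have t0b: "t0 powr (P - p) = base" unfolding t0_def using base0 pP by (simp add: powr_powr)
  have t0r: "t0 powr (p - r) = base powr ((p - r) / (P - p))" unfolding t0_def using base0 pP by (simp add: powr_powr)
  have "\<mu> * a powr (q * (1 - g)) < alpha_C1 (real N) p q S C"
    using assms(10) unfolding g_def alpha_def by simp
  also have "alpha_C1 (real N) p q S C = base powr ((p - r) / (P - p)) * (q * (P - p)) / (p * C * (P - r))"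
    unfolding alpha_C1_def base_def Let_def P_def r_def g_def by simp
  finally have Alt: "A < t0 powr (p - r) * (P - p) / (p * (P - r))"
    unfolding A_def t0r using q0 assms pP rp p0 by (simp add: field_simps)
  have Bb: "B * base = (p - r) / (p * (P - r))"
  proof -
    have sp: "S powr (P / p) > 0" using assms(8) by simp
    have gen: "\<And>x y z w :: real. x > 0 \<Longrightarrow> y > 0 \<Longrightarrow> 1 / (x * y) * (x * y * z / w) = z / w" by simp
    show ?thesis unfolding B_def base_def by (rule gen[OF P0 sp])
  qed
  have e1: "t0 powr p = t0 powr r * t0 powr (p - r)" using t00 by (simp add: powr_add[symmetric])
  have e2: "t0 powr P = t0 powr r * t0 powr (p - r) * base"
  proof -
    have "t0 powr P = t0 powr r * t0 powr (p - r) * t0 powr (P - p)" using t00 by (simp add: powr_add[symmetric])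
    thus ?thesis using t0b by simp
  qed
  have "h t0 = t0 powr r * (t0 powr (p - r) * (1 / p - B * base) - A)"
    unfolding hh using e1 e2 p0 by (simp add: algebra_simps)
  also have "1 / p - B * base = (P - p) / (p * (P - r))"
    unfolding Bb using p0 pP rp by (simp add: field_simps)
  finally have "h t0 = t0 powr r * (t0 powr (p - r) * (P - p) / (p * (P - r)) - A)" by simp
  moreover have "t0 powr (p - r) * (P - p) / (p * (P - r)) - A > 0" using Alt by simp
  ultimately have "h t0 > 0" using t00 by simp
  show ?thesis unfolding hh
    by (rule abstract_h[OF r0 rp pP A0 B0 t00 \<open>h t0 > 0\<close>[unfolded hh]])
qed

end
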